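(* Let $X$ be a digraph of order $n$ whose $H$-spectrum is $\{-(n-1), 1^{(n-1)}\}$ (i.e., $-(n-1)$ once and $1$ with multiplicity $n-1$). Then $X$ is isomorphic to one of $K_1$, $K_2$, $T_2$, $K_3'$, $K_4'$.
   Context: A digraph has a finite vertex set and an arc set of ordered pairs of distinct vertices; $\{x,y\}$ is a digon if both $xy,yx$ are arcs. The Hermitian adjacency matrix $H(X)$ has $(u,v)$-entry $1$ if $uv$ and $vu$ are arcs, $i$ if only $uv$ is an arc, $-i$ if only $vu$ is an arc, and $0$ otherwise; the $H$-spectrum is the multiset of eigenvalues of $H(X)$. $K_1$ is a single vertex; $K_2$ is a single digon on two vertices; $T_2$ is a single arc on two vertices. $K_3'$ has vertices $a,b,c$, a digon $\{a,b\}$ and arcs $ac$, $cb$. $K_4'$ has vertices $x_1,x_2,x_3,x_4$, arcs $x_1x_2,x_2x_3,x_3x_4,x_4x_1$, and digons $\{x_1,x_3\}$ and $\{x_2,x_4\}$. *)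

theory Defs
  imports "Jordan_Normal_Form.Char_Poly"
begin

definition digraph :: "'a set \<Rightarrow> ('a \<times> 'a) set \<Rightarrow> bool" where
  "digraph V A \<longleftrightarrow> finite V \<and> A \<subseteq> V \<times> V \<and> (\<forall>v. (v, v) \<notin> A)"

definition herm_entry :: "('a \<times> 'a) set \<Rightarrow> 'a \<Rightarrow> 'a \<Rightarrow> complex" where
  "herm_entry A u v =
     (if (u, v) \<in> A \<and> (v, u) \<in> A then 1
      else if (u, v) \<in> A then \<i>
      else if (v, u) \<in> A then - \<i>
      else 0)"

definition herm_adj :: "('a \<times> 'a) set \<Rightarrow> (nat \<Rightarrow> 'a) \<Rightarrow> nat \<Rightarrow> complex mat" where
  "herm_adj A f n = mat n n (\<lambda>(i, j). herm_entry A (f i) (f j))"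

definition has_spectrum :: "complex mat \<Rightarrow> complex multiset \<Rightarrow> bool" where
  "has_spectrum M S \<longleftrightarrow>
     char_poly M = prod_mset (image_mset (\<lambda>a. [:- a, 1:]) S)"

definition digraph_iso :: "'a set \<Rightarrow> ('a \<times> 'a) set \<Rightarrow> 'b set \<Rightarrow> ('b \<times> 'b) set \<Rightarrow> bool" where
  "digraph_iso V A W B \<longleftrightarrow>
     (\<exists>g. bij_betw g V W \<and> (\<forall>u\<in>V. \<forall>v\<in>V. (u, v) \<in> A \<longleftrightarrow> (g u, g v) \<in> B))"

definition K1_V :: "nat set" where "K1_V = {0}"
definition K1_A :: "(nat \<times> nat) set" where "K1_A = {}"
definition K2_V :: "nat set" where "K2_V = {0, 1}"
definition K2_A :: "(nat \<times> nat) set" where "K2_A = {(0, 1), (1, 0)}"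
definition T2_V :: "nat set" where "T2_V = {0, 1}"
definition T2_A :: "(nat \<times> nat) set" where "T2_A = {(0, 1)}"
text \<open>K3': a = 0, b = 1, c = 2; digon {a,b}, arcs ac, cb.\<close>
definition K3'_V :: "nat set" where "K3'_V = {0, 1, 2}"
definition K3'_A :: "(nat \<times> nat) set" where "K3'_A = {(0, 1), (1, 0), (0, 2), (2, 1)}"
text \<open>K4': x1..x4 = 0..3; arcs x1x2, x2x3, x3x4, x4x1; digons {x1,x3}, {x2,x4}.\<close>
definition K4'_V :: "nat set" where "K4'_V = {0, 1, 2, 3}"
definition K4'_A :: "(nat \<times> nat) set" where
  "K4'_A = {(0, 1), (1, 2), (2, 3), (3, 0), (0, 2), (2, 0), (1, 3), (3, 1)}"

end

theory Submission
  imports Defs "Jordan_Normal_Form.Schur_Decomposition"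
begin


lemma mult_entry:
  assumes "X \<in> carrier_mat n n" "Y \<in> carrier_mat n n" "i < n" "j < n"
  shows "(X * Y) $$ (i,j) = (\<Sum>k<n. X $$ (i,k) * Y $$ (k,j))"
  using assms by (auto simp: scalar_prod_def lessThan_atLeast0 intro!: sum.cong)

lemmas mult_entry' = mult_entry[simplified index_mult_mat(2,3)]

definition tr :: "complex mat \<Rightarrow> complex" where
  "tr X = (\<Sum>i<dim_row X. X $$ (i,i))"

lemma tr_comm:
  assumes "X \<in> carrier_mat n n" "Y \<in> carrier_mat n n"
  shows "tr (X * Y) = tr (Y * X)"
proof -
  have "tr (X * Y) = (\<Sum>i<n. \<Sum>k<n. X $$ (i,k) * Y $$ (k,i))"
    using assms by (simp add: tr_def mult_entry del: index_mult_mat(1))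
  also have "\<dots> = (\<Sum>k<n. \<Sum>i<n. Y $$ (k,i) * X $$ (i,k))"
    by (subst sum.swap) (simp add: mult.commute)
  also have "\<dots> = tr (Y * X)"
    using assms by (simp add: tr_def mult_entry del: index_mult_mat(1))
  finally show ?thesis .
qed

lemma tr_sim:
  assumes "X \<in> carrier_mat n n" "P \<in> carrier_mat n n" "Q \<in> carrier_mat n n" "Q * P = 1\<^sub>m n"
  shows "tr (P * X * Q) = tr X"
proof -
  have "tr (P * X * Q) = tr (Q * (P * X))"
    using assms by (intro tr_comm[of _ n]) auto
  also have "Q * (P * X) = (Q * P) * X" using assoc_mult_mat[of Q n n P n X n] assms by simp
  also have "\<dots> = X" using assms left_mult_one_mat[OF assms(1)] by simp
  finally show ?thesis .
qed

lemma ut_mult: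
  assumes "X \<in> carrier_mat n n" "Y \<in> carrier_mat n n" "upper_triangular X" "upper_triangular Y"
  shows "upper_triangular (X * Y)" "\<And>i. i < n \<Longrightarrow> (X * Y) $$ (i,i) = X $$ (i,i) * Y $$ (i,i)"
proof -
  show "upper_triangular (X * Y)"
  proof (rule upper_triangularI)
    fix i j assume ij: "j < i" "i < dim_row (X * Y)"
    hence "(X * Y) $$ (i,j) = (\<Sum>k<n. X $$ (i,k) * Y $$ (k,j))" using assms by (simp add: mult_entry del: index_mult_mat(1))
    also have "\<dots> = 0"
    proof (rule sum.neutral, intro ballI)
      fix k assume "k \<in> {..<n}"
      then show "X $$ (i,k) * Y $$ (k,j) = 0" using assms ij
        by (cases "k < i") (auto simp: upper_triangularD[OF assms(3)] upper_triangularD[OF assms(4)] carrier_matD)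
    qed
    finally show "(X * Y) $$ (i,j) = 0" .
  qed
  fix i assume i: "i < n"
  hence "(X * Y) $$ (i,i) = (\<Sum>k<n. X $$ (i,k) * Y $$ (k,i))" using assms by (simp add: mult_entry del: index_mult_mat(1))
  also have "\<dots> = (\<Sum>k\<in>{i}. X $$ (i,k) * Y $$ (k,i))"
  proof (rule sum.mono_neutral_right)
    show "\<forall>k\<in>{..<n} - {i}. X $$ (i, k) * Y $$ (k, i) = 0"
    proof
      fix k assume "k \<in> {..<n} - {i}"
      then show "X $$ (i,k) * Y $$ (k,i) = 0" using assms i
        by (cases "k < i") (auto simp: upper_triangularD[OF assms(3)] upper_triangularD[OF assms(4)] carrier_matD)
    qed
  qed (use i in auto)
  finally show "(X * Y) $$ (i,i) = X $$ (i,i) * Y $$ (i,i)" by simp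
qed


lemma sim_mult:
  fixes P :: "complex mat"
  assumes P: "P \<in> carrier_mat n n" and X: "X \<in> carrier_mat n n" and Y: "Y \<in> carrier_mat n n"
    and Q: "Q \<in> carrier_mat n n" and QP: "Q * P = 1\<^sub>m n"
  shows "(P * X * Q) * (P * Y * Q) = P * (X * Y) * Q"
proof -
  have QPZ: "Q * (P * Z) = Z" if "Z \<in> carrier_mat n m" for Z m
  proof -
    have "Q * (P * Z) = (Q * P) * Z" using assoc_mult_mat[OF Q P that] by simp
    also have "\<dots> = Z" using QP left_mult_one_mat[OF that] by simp
    finally show ?thesis .
  qed
  have e1: "P * Y * Q = P * (Y * Q)" using P Y Q by (simp add: assoc_mult_mat[of _ n n _ n _ n])
  have "(P * X * Q) * (P * Y * Q) = (P * X) * (Q * (P * (Y * Q)))"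
    unfolding e1 using P X Y Q by (simp add: assoc_mult_mat[of _ n n _ n _ n])
  also have "Q * (P * (Y * Q)) = Y * Q" using Y Q by (intro QPZ) auto
  also have "(P * X) * (Y * Q) = P * (X * (Y * Q))" using P X Y Q by (simp add: assoc_mult_mat[of _ n n _ n _ n])
  also have "X * (Y * Q) = (X * Y) * Q" using X Y Q by (simp add: assoc_mult_mat[of _ n n _ n _ n])
  also have "P * ((X * Y) * Q) = P * (X * Y) * Q" using P X Y Q by (simp add: assoc_mult_mat[of _ n n _ n _ n])
  finally show ?thesis .
qed

lemma sim_lin:
  fixes P :: "complex mat"
  assumes P: "P \<in> carrier_mat n n" and B: "B \<in> carrier_mat n n"
    and Q: "Q \<in> carrier_mat n n" and PQ: "P * Q = 1\<^sub>m n"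
  shows "P * B * Q - 1\<^sub>m n = P * (B - 1\<^sub>m n) * Q"
    "P * B * Q + c \<cdot>\<^sub>m 1\<^sub>m n = P * (B + c \<cdot>\<^sub>m 1\<^sub>m n) * Q"
proof -
  have "P * (B - 1\<^sub>m n) * Q = (P * B - P) * Q"
    using P B by (simp add: mult_minus_distrib_mat[of _ n n])
  also have "\<dots> = P * B * Q - P * Q"
    using P B Q by (simp add: minus_mult_distrib_mat[of _ n n])
  finally show "P * B * Q - 1\<^sub>m n = P * (B - 1\<^sub>m n) * Q" using PQ by simp
  have "P * (B + c \<cdot>\<^sub>m 1\<^sub>m n) * Q = (P * B + c \<cdot>\<^sub>m P) * Q"
    using P B by (simp add: mult_add_distrib_mat[of _ n n] mult_smult_distrib[OF P one_carrier_mat])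
  also have "\<dots> = P * B * Q + c \<cdot>\<^sub>m (P * Q)"
    using P B Q by (simp add: add_mult_distrib_mat[of _ n n] mult_smult_assoc_mat[of _ n n])
  finally show "P * B * Q + c \<cdot>\<^sub>m 1\<^sub>m n = P * (B + c \<cdot>\<^sub>m 1\<^sub>m n) * Q" using PQ by simp
qed


lemma analytic:
  fixes H :: "complex mat" and n :: nat and c :: complex
  assumes cdef: "c = of_nat n - 1"
  assumes H: "H \<in> carrier_mat n n"
   and herm: "\<And>i j. i<n \<Longrightarrow> j<n \<Longrightarrow> H$$(j,i) = cnj (H$$(i,j))"
   and cp: "char_poly H = (\<Prod>e \<leftarrow> (-c) # replicate (n-1) 1. [:-e,1:])"
  shows "\<And>i j. i<n \<Longrightarrow> j<n \<Longrightarrow>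
     (\<Sum>k<n. H$$(i,k)*H$$(k,j)) + (c - 1) * H$$(i,j) - (if i = j then c else 0) = 0"
proof -
  let ?es = "(-c) # replicate (n-1) 1"
  obtain B P Q where sd: "schur_decomposition H ?es = (B,P,Q)" by (cases "schur_decomposition H ?es") auto
  from schur_decomposition[OF H cp sd] have sim: "similar_mat_wit H B P Q"
    and ut: "upper_triangular B" and dg: "diag_mat B = ?es" by auto
  from sim H have B: "B \<in> carrier_mat n n" and P: "P \<in> carrier_mat n n" and Q: "Q \<in> carrier_mat n n"
    and PQ: "P * Q = 1\<^sub>m n" and QP: "Q * P = 1\<^sub>m n" and HPBQ: "H = P * B * Q"
    unfolding similar_mat_wit_def Let_def by auto
  have Bd: "B $$ (i,i) = (if i = 0 then -c else 1)" if "i < n" for i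
  proof -
    have "B $$ (i,i) = diag_mat B ! i" using that B by (simp add: diag_mat_def)
    also have "\<dots> = ?es ! i" using dg by simp
    finally show ?thesis using that by (simp add: nth_Cons')
  qed
  define BM where "BM = B - 1\<^sub>m n"
  define BP where "BP = B + c \<cdot>\<^sub>m 1\<^sub>m n"
  have BM: "BM \<in> carrier_mat n n" and BP: "BP \<in> carrier_mat n n" using B by (auto simp: BM_def BP_def)
  have utM: "upper_triangular BM" using ut B unfolding BM_def
    by (intro upper_triangularI) (auto simp: upper_triangularD)
  have utP: "upper_triangular BP" using ut B unfolding BP_def
    by (intro upper_triangularI) (auto simp: upper_triangularD)
  define NB where "NB = BM * BP"
  have NB: "NB \<in> carrier_mat n n" using BM BP by (simp add: NB_def)
  have utNB: "upper_triangular NB" using ut_mult(1)[OF BM BP utM utP] by (simp add: NB_def)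
  have dNB: "NB $$ (i,i) = 0" if "i < n" for i
  proof -
    have "NB $$ (i,i) = BM $$ (i,i) * BP $$ (i,i)" using ut_mult(2)[OF BM BP utM utP that] by (simp add: NB_def)
    also have "\<dots> = 0" using that B Bd[OF that] by (simp add: BM_def BP_def)
    finally show ?thesis .
  qed
  have trNB: "tr (NB * NB) = 0"
    using ut_mult(2)[OF NB NB utNB utNB] NB dNB by (simp add: tr_def)
  define N where "N = (H - 1\<^sub>m n) * (H + c \<cdot>\<^sub>m 1\<^sub>m n)"
  have N: "N \<in> carrier_mat n n" using H unfolding N_def by (intro mult_carrier_mat) auto
  have "N = P * NB * Q"
    unfolding N_def HPBQ sim_lin[OF P B Q PQ] NB_def BM_def BP_def
    by (rule sim_mult[OF P _ _ Q QP]) (use B in auto)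
  hence "N * N = P * (NB * NB) * Q" using sim_mult[OF P NB NB Q QP] by simp
  hence trN: "tr (N * N) = 0" using tr_sim[of "NB * NB" n P Q] NB P Q QP trNB by simp
  define F where "F i j = (\<Sum>k<n. H$$(i,k)*H$$(k,j)) + (c - 1) * H$$(i,j) - (if i = j then c else 0)" for i j
  have NF: "N $$ (i,j) = F i j" if "i < n" "j < n" for i j
  proof -
    have ifm: "\<And>P (x::complex). (if P then 1 else 0) * x = (if P then x else 0)" by simp
    have "N $$ (i,j) = (\<Sum>k<n. (H$$(i,k) - (if i = k then 1 else 0)) * (H$$(k,j) + (if k = j then c else 0)))"
      unfolding N_def using H that
      by (subst mult_entry[of _ n]) (auto intro!: sum.cong)
    also have "\<dots> = (\<Sum>k<n. H$$(i,k)*H$$(k,j)) + (\<Sum>k<n. H$$(i,k) * (if k = j then c else 0))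
       - (\<Sum>k<n. (if i = k then 1 else 0) * H$$(k,j)) - (\<Sum>k<n. (if i = k then 1 else 0) * (if k = j then c else 0))"
      by (simp add: algebra_simps sum.distrib sum_subtractf)
    also have "(\<Sum>k<n. H$$(i,k) * (if k = j then c else 0)) = H$$(i,j) * c"
      using that by (simp add: if_distrib sum.delta' cong: if_cong)
    also have "(\<Sum>k<n. (if i = k then 1 else 0) * H$$(k,j)) = H$$(i,j)"
      using that by (simp only: ifm) (simp add: sum.delta)
    also have "(\<Sum>k<n. (if i = k then 1 else 0) * (if k = j then c else (0::complex))) = (if i = j then c else 0)"
      using that by (simp add: if_distrib sum.delta cong: if_cong)
    finally show ?thesis by (simp add: F_def algebra_simps)
  qed
  have cc: "cnj c = c" using cdef by simp
  have Fh: "F j i = cnj (F i j)" if "i < n" "j < n" for i j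
  proof -
    have herm': "cnj (H$$(a,b)) = H$$(b,a)" if "a < n" "b < n" for a b using herm[OF that] by simp
    have "cnj (\<Sum>k<n. H$$(i,k)*H$$(k,j)) = (\<Sum>k<n. H$$(j,k)*H$$(k,i))"
      unfolding cnj_sum by (intro sum.cong refl) (use that in \<open>auto simp: herm' mult.commute\<close>)
    then show ?thesis using that unfolding F_def by (simp add: herm' cc)
  qed
  have "tr (N * N) = (\<Sum>i<n. \<Sum>k<n. F i k * F k i)"
    using N by (simp add: tr_def mult_entry NF del: index_mult_mat(1))
  also have "\<dots> = (\<Sum>i<n. \<Sum>k<n. complex_of_real ((cmod (F i k))^2))"
  proof (intro sum.cong refl)
    fix i k assume "i \<in> {..<n}" "k \<in> {..<n}"
    then show "F i k * F k i = complex_of_real ((cmod (F i k))^2)"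
      using Fh[of i k] complex_norm_square[of "F i k"] by simp
  qed
  also have "\<dots> = complex_of_real (\<Sum>i<n. \<Sum>k<n. (cmod (F i k))^2)" by simp
  finally have "(\<Sum>i<n. \<Sum>k<n. (cmod (F i k))^2) = 0" using trN by (metis of_real_eq_0_iff)
  hence "\<forall>i\<in>{..<n}. (\<Sum>k<n. (cmod (F i k))^2) = 0"
    by (subst (asm) sum_nonneg_eq_0_iff) (auto intro: sum_nonneg)
  hence "\<forall>i\<in>{..<n}. \<forall>k\<in>{..<n}. (cmod (F i k))^2 = 0"
    by (subst (asm) sum_nonneg_eq_0_iff) auto
  then show "\<And>i j. i<n \<Longrightarrow> j<n \<Longrightarrow>
     (\<Sum>k<n. H$$(i,k)*H$$(k,j)) + (c - 1) * H$$(i,j) - (if i = j then c else 0) = 0"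
    by (auto simp: F_def)
qed

lemma herm_entry_cnj: "herm_entry A v u = cnj (herm_entry A u v)"
  unfolding herm_entry_def by auto

lemma herm_entry_vals: "herm_entry A u v \<in> {0, 1, \<i>, -\<i>}"
  unfolding herm_entry_def by auto

lemma herm_entry_arc: "(u, v) \<in> A \<longleftrightarrow> herm_entry A u v = 1 \<or> herm_entry A u v = \<i>"
  unfolding herm_entry_def by (auto simp: complex_eq_iff)

lemma herm_entry_loop: "(u, u) \<notin> A \<Longrightarrow> herm_entry A u u = 0"
  unfolding herm_entry_def by auto

lemma sum_units_eq:
  fixes z :: "nat \<Rightarrow> complex"
  assumes K: "finite K" and z: "\<And>k. k \<in> K \<Longrightarrow> cmod (z k) = 1" and w: "cmod w = 1"
    and s: "(\<Sum>k\<in>K. z k) = of_nat (card K) * w"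
  shows "\<And>k. k \<in> K \<Longrightarrow> z k = w"
proof -
  have ww: "w * cnj w = 1" using w complex_norm_square[of w] by simp
  have "(\<Sum>k\<in>K. Re (z k * cnj w)) = Re ((\<Sum>k\<in>K. z k) * cnj w)"
    by (simp add: sum_distrib_right)
  also have "\<dots> = of_nat (card K)" using s ww by (simp add: mult.assoc)
  finally have "(\<Sum>k\<in>K. 1 - Re (z k * cnj w)) = 0" by (simp add: sum_subtractf)
  moreover have le: "Re (z k * cnj w) \<le> 1" if "k \<in> K" for k
    using complex_Re_le_cmod[of "z k * cnj w"] z[OF that] w by (simp add: norm_mult)
  ultimately have re: "Re (z k * cnj w) = 1" if "k \<in> K" for k
    using sum_nonneg_eq_0_iff[OF K, of "\<lambda>k. 1 - Re (z k * cnj w)"] le that by force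
  fix k assume k: "k \<in> K"
  have m: "cmod (z k * cnj w) = 1" using z[OF k] w by (simp add: norm_mult)
  have "(cmod (z k * cnj w))^2 = (Re (z k * cnj w))^2 + (Im (z k * cnj w))^2"
    by (simp add: cmod_power2)
  hence "Im (z k * cnj w) = 0" using m re[OF k] by simp
  hence "z k * cnj w = 1" using re[OF k] by (simp add: complex_eq_iff)
  hence zc: "z k * cnj w = 1" .
  have "z k = z k * (w * cnj w)" using ww by simp
  also have "\<dots> = (z k * cnj w) * w" by (simp add: ac_simps)
  finally show "z k = w" using zc by simp
qed

lemma iso_perm:
  assumes f: "bij_betw f {0..<n} V" and xs: "distinct xs" "length xs = n" "set xs = W"
    and arcs: "\<And>i j. i < n \<Longrightarrow> j < n \<Longrightarrow> ((f i, f j) \<in> A \<longleftrightarrow> (xs!i, xs!j) \<in> B)"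
  shows "digraph_iso V A W B"
proof -
  define g where "g v = xs ! (inv_into {0..<n} f v)" for v
  have "bij_betw (inv_into {0..<n} f) V {0..<n}" using f by (rule bij_betw_inv_into)
  moreover have "bij_betw ((!) xs) {0..<n} W" using xs by (intro bij_betw_nth) auto
  ultimately have "bij_betw g V W" unfolding g_def using bij_betw_trans[unfolded comp_def] by blast
  moreover have "(u, v) \<in> A \<longleftrightarrow> (g u, g v) \<in> B" if "u \<in> V" "v \<in> V" for u v
  proof -
    have iu: "inv_into {0..<n} f u < n" "f (inv_into {0..<n} f u) = u"
      using that f by (auto simp: bij_betw_def inv_into_into f_inv_into_f)
    have iv: "inv_into {0..<n} f v < n" "f (inv_into {0..<n} f v) = v"
      using that f by (auto simp: bij_betw_def inv_into_into f_inv_into_f)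
    show ?thesis using arcs[OF iu(1) iv(1)] iu(2) iv(2) by (simp add: g_def)
  qed
  ultimately show ?thesis unfolding digraph_iso_def by blast
qed




lemma graph_structure:
  assumes dg: "digraph V A" and nV: "n = card V" and f: "bij_betw f {0..<n} V"
    and sp: "has_spectrum (herm_adj A f n)
           (add_mset (- (of_nat n - 1)) (replicate_mset (n - 1) 1))"
  shows "n \<ge> 1"
    "\<And>i j. i < n \<Longrightarrow> j < n \<Longrightarrow> i \<noteq> j \<Longrightarrow> herm_entry A (f i) (f j) \<noteq> 0"
    "\<And>i j k. i < n \<Longrightarrow> j < n \<Longrightarrow> k < n \<Longrightarrow> i \<noteq> j \<Longrightarrow> i \<noteq> k \<Longrightarrow> j \<noteq> k \<Longrightarrow>
       herm_entry A (f i) (f k) * herm_entry A (f k) (f j) = - herm_entry A (f i) (f j)"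
proof -
  define h where "h i j = herm_entry A (f i) (f j)" for i j
  define H where "H = herm_adj A f n"
  define c :: complex where "c = of_nat n - 1"
  have H: "H \<in> carrier_mat n n" by (simp add: H_def herm_adj_def)
  have Hh: "H $$ (i,j) = h i j" if "i < n" "j < n" for i j
    using that by (simp add: H_def herm_adj_def h_def)
  have hc: "h j i = cnj (h i j)" for i j unfolding h_def by (rule herm_entry_cnj)
  have h0: "h i i = 0" for i unfolding h_def using dg by (intro herm_entry_loop) (simp add: digraph_def)
  have hv: "h i j \<in> {0, 1, \<i>, -\<i>}" for i j unfolding h_def by (rule herm_entry_vals)
  have herm: "H$$(j,i) = cnj (H$$(i,j))" if "i < n" "j < n" for i j using that Hh hc[of j i] by simp
  have cp: "char_poly H = (\<Prod>e \<leftarrow> (-c) # replicate (n-1) 1. [:-e,1:])"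
    using sp unfolding has_spectrum_def H_def c_def
    by (simp only: image_mset_add_mset prod_mset.add_mset list.map prod_list.Cons map_replicate prod_list_replicate
      image_replicate_mset prod_mset_replicate_mset)
  have d1: "degree (char_poly H) = n" using degree_monic_char_poly[OF H] by simp
  have d2: "degree (\<Prod>e \<leftarrow> (-c) # replicate (n-1) 1. [:-e,1:]) = Suc (n - 1)"
    using degree_linear_factors[of uminus "(-c) # replicate (n-1) 1"] by (simp only: length_Cons length_replicate)
  from d1 d2 have "n = Suc (n - 1)" unfolding cp by linarith
  thus n1: "n \<ge> 1" by linarith
  have E: "(\<Sum>k<n. H$$(i,k)*H$$(k,j)) + (c - 1) * H$$(i,j) - (if i = j then c else 0) = 0"
    if "i < n" "j < n" for i j
    by (rule analytic[of c n H i j, OF c_def H _ cp that]) (rule herm)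
  have sH: "(\<Sum>k<n. H$$(i,k)*H$$(k,j)) = (\<Sum>k<n. h i k * h k j)" if "i < n" "j < n" for i j
    using that by (intro sum.cong refl) (simp add: Hh)
  have nz: "h i j \<noteq> 0" if ij: "i < n" "j < n" "i \<noteq> j" for i j
  proof -
    have "(\<Sum>k<n. h i k * h k i) + (c - 1) * h i i - c = 0" using E[OF ij(1) ij(1)] sH[OF ij(1) ij(1)] ij(1) Hh[OF ij(1) ij(1)]
      by simp
    hence e1: "(\<Sum>k<n. h i k * h k i) = c" by (simp add: h0)
    have e2: "h i k * h k i = complex_of_real ((cmod (h i k))^2)" for k
      using hc[of k i] complex_norm_square[of "h i k"] by simp
    have "complex_of_real (\<Sum>k<n. (cmod (h i k))^2) = (\<Sum>k<n. h i k * h k i)"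
      by (simp add: e2)
    also have "\<dots> = complex_of_real (real n - 1)" using e1 n1 by (simp add: c_def of_nat_diff)
    finally have S: "(\<Sum>k<n. (cmod (h i k))^2) = real n - 1" by (simp only: of_real_eq_iff)
    have "(\<Sum>k<n. (cmod (h i k))^2) = (\<Sum>k\<in>{..<n}-{i}. (cmod (h i k))^2)"
      using ij by (intro sum.mono_neutral_right) (auto simp: h0)
    hence S2: "(\<Sum>k\<in>{..<n}-{i}. 1 - (cmod (h i k))^2) = 0" using S ij(1)
      by (simp add: sum_subtractf card_Diff_singleton)
    have le: "\<forall>k\<in>{..<n}-{i}. 0 \<le> 1 - (cmod (h i k))^2"
    proof
      fix k have "h i k \<in> {0, 1, \<i>, -\<i>}" by (rule hv)
      thus "0 \<le> 1 - (cmod (h i k))^2" by auto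
    qed
    have "\<forall>k\<in>{..<n}-{i}. 1 - (cmod (h i k))^2 = 0"
      using sum_nonneg_eq_0_iff[of "{..<n}-{i}" "\<lambda>k. 1 - (cmod (h i k))^2"] S2 le by blast
    hence "1 - (cmod (h i j))^2 = 0" using ij by blast
    thus ?thesis by auto
  qed
  show "\<And>i j. i < n \<Longrightarrow> j < n \<Longrightarrow> i \<noteq> j \<Longrightarrow> herm_entry A (f i) (f j) \<noteq> 0"
    using nz unfolding h_def by blast
  have unit: "cmod (h i j) = 1" if "i < n" "j < n" "i \<noteq> j" for i j
    using nz[OF that] hv[of i j] by auto
  fix i j k assume ijk: "i < n" "j < n" "k < n" "i \<noteq> j" "i \<noteq> k" "j \<noteq> k"
  let ?K = "{..<n} - {i, j}"
  have "(\<Sum>l<n. h i l * h l j) + (c - 1) * h i j = 0" using E[OF ijk(1,2)] ijk by (simp add: Hh)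
  moreover have "(\<Sum>l<n. h i l * h l j) = (\<Sum>l\<in>?K. h i l * h l j)"
    using ijk by (intro sum.mono_neutral_right) (auto simp: h0)
  moreover have cK: "card ?K = n - 2" using ijk by (simp add: card_Diff_subset)
  ultimately have "(\<Sum>l\<in>?K. h i l * h l j) = of_nat (card ?K) * (- h i j)"
    using ijk by (simp add: c_def of_nat_diff algebra_simps)
  from sum_units_eq[OF _ _ _ this, of k]
  have "h i k * h k j = - h i j" using ijk unit by (auto simp: norm_mult)
  thus "herm_entry A (f i) (f k) * herm_entry A (f k) (f j) = - herm_entry A (f i) (f j)"
    by (simp add: h_def)
qed



lemma all2: "(\<forall>i<(2::nat). P i) \<longleftrightarrow> P 0 \<and> P 1"
  by (auto simp: less_Suc_eq numeral_eq_Suc)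
lemma all3: "(\<forall>i<(3::nat). P i) \<longleftrightarrow> P 0 \<and> P 1 \<and> P 2"
  by (auto simp: less_Suc_eq numeral_eq_Suc)
lemma all4: "(\<forall>i<(4::nat). P i) \<longleftrightarrow> P 0 \<and> P 1 \<and> P 2 \<and> P 3"
  by (auto simp: less_Suc_eq numeral_eq_Suc)

definition hvl :: "complex list \<Rightarrow> nat \<Rightarrow> nat \<Rightarrow> complex" where
  "hvl ws i j = (if i = j then 0 else if i = 0 then ws ! j else if j = 0 then cnj (ws ! i)
     else - cnj (ws ! i) * ws ! j)"

definition pos4 :: "complex \<Rightarrow> nat" where
  "pos4 x = (if x = \<i> then 1 else if x = 1 then 2 else 3)"

lemma case4:
  assumes "a \<in> {1, \<i>, -\<i>}" "b \<in> {1, \<i>, -\<i>}" "d \<in> {1, \<i>, -\<i>}" "a \<noteq> b" "a \<noteq> d" "b \<noteq> d"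
  shows "\<exists>xs. distinct xs \<and> length xs = 4 \<and> set xs = K4'_V \<and>
    (\<forall>i<4. \<forall>j<4. (hvl [0,a,b,d] i j = 1 \<or> hvl [0,a,b,d] i j = \<i>) \<longleftrightarrow> (xs!i, xs!j) \<in> K4'_A)"
  apply (rule exI[of _ "[0, pos4 a, pos4 b, pos4 d]"])
  using assms
  apply (simp only: all4 insert_iff empty_iff)
  apply (elim disjE)
  apply (simp_all add: hvl_def pos4_def K4'_V_def K4'_A_def complex_eq_iff)
  apply auto
  done

definition xs3 :: "complex \<Rightarrow> complex \<Rightarrow> nat list" where
  "xs3 a b = (if a=1 \<and> b=\<i> then [0,1,2] else if a=\<i> \<and> b=1 then [0,2,1] else if a=1 \<and> b=-\<i> then [1,0,2]
     else if a=-\<i> \<and> b=1 then [1,2,0] else if a=\<i> \<and> b=-\<i> then [2,1,0] else [2,0,1])"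

lemma case3:
  assumes "a \<in> {1, \<i>, -\<i>}" "b \<in> {1, \<i>, -\<i>}" "a \<noteq> b"
  shows "\<exists>xs. distinct xs \<and> length xs = 3 \<and> set xs = K3'_V \<and>
    (\<forall>i<3. \<forall>j<3. (hvl [0,a,b] i j = 1 \<or> hvl [0,a,b] i j = \<i>) \<longleftrightarrow> (xs!i, xs!j) \<in> K3'_A)"
  apply (rule exI[of _ "xs3 a b"])
  using assms
  apply (simp only: all3 insert_iff empty_iff)
  apply (elim disjE)
  apply (simp_all add: hvl_def xs3_def K3'_V_def K3'_A_def complex_eq_iff)
  apply auto
  done



theorem proposition5p2:
  fixes V :: "'a set" and A :: "('a \<times> 'a) set" and n :: nat and f :: "nat \<Rightarrow> 'a"
  assumes "digraph V A"
    and "n = card V"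
    and "bij_betw f {0..<n} V"
    and "has_spectrum (herm_adj A f n)
           (add_mset (- (of_nat n - 1)) (replicate_mset (n - 1) 1))"
  shows "digraph_iso V A K1_V K1_A \<or> digraph_iso V A K2_V K2_A \<or>
         digraph_iso V A T2_V T2_A \<or> digraph_iso V A K3'_V K3'_A \<or>
         digraph_iso V A K4'_V K4'_A"
proof -
  define h where "h i j = herm_entry A (f i) (f j)" for i j
  have n1: "n \<ge> 1" by (rule graph_structure(1)[OF assms])
  have nz: "h i j \<noteq> 0" if "i<n" "j<n" "i\<noteq>j" for i j
    using graph_structure(2)[OF assms that] by (simp add: h_def)
  have tri: "h i k * h k j = - h i j" if "i<n" "j<n" "k<n" "i\<noteq>j" "i\<noteq>k" "j\<noteq>k" for i j k
    using graph_structure(3)[OF assms that] by (simp add: h_def)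
  have hc: "h j i = cnj (h i j)" for i j unfolding h_def by (rule herm_entry_cnj)
  have h0: "h i i = 0" for i unfolding h_def using assms(1) by (intro herm_entry_loop) (simp add: digraph_def)
  have hv: "h i j \<in> {0, 1, \<i>, -\<i>}" for i j unfolding h_def by (rule herm_entry_vals)
  have v3: "h i j \<in> {1, \<i>, -\<i>}" if "i<n" "j<n" "i\<noteq>j" for i j using hv[of i j] nz[OF that] by auto
  have arc: "(f i, f j) \<in> A \<longleftrightarrow> h i j = 1 \<or> h i j = \<i>" for i j unfolding h_def by (rule herm_entry_arc)
  define ws where "ws = map (h 0) [0..<n]"
  have wsk: "ws ! k = h 0 k" if "k < n" for k using that by (simp add: ws_def)
  have hh: "h i j = hvl ws i j" if ij: "i<n" "j<n" for i j
  proof -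
    consider "i = j" | "i \<noteq> j" "i = 0" | "i \<noteq> j" "i \<noteq> 0" "j = 0" | "i \<noteq> j" "i \<noteq> 0" "j \<noteq> 0" by blast
    then show ?thesis
    proof cases
      case 1 then show ?thesis by (simp add: hvl_def h0)
    next
      case 2 then show ?thesis using ij by (simp add: hvl_def wsk)
    next
      case 3 then show ?thesis using ij hc[of 0 i] by (simp add: hvl_def wsk)
    next
      case 4
      have "h i 0 * h 0 j = - h i j" using tri[of i j 0] ij 4 n1 by simp
      hence "h i j = - (h i 0 * h 0 j)" by simp
      also have "h i 0 = cnj (h 0 i)" by (rule hc)
      finally show ?thesis using 4 ij by (simp add: hvl_def wsk)
    qed
  qed
  have cond: "(f i, f j) \<in> A \<longleftrightarrow> (hvl ws i j = 1 \<or> hvl ws i j = \<i>)" if "i<n" "j<n" for i j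
    using arc[of i j] hh[OF that] by simp
  have dist: "h 0 j \<noteq> h 0 k" if jk: "0<j" "j<n" "0<k" "k<n" "j\<noteq>k" for j k
  proof
    assume eq: "h 0 j = h 0 k"
    have "h j 0 * h 0 k = - h j k" using tri[of j k 0] jk by simp
    hence "cnj (h 0 j) * h 0 j = - h j k" using hc[of 0 j] eq by simp
    moreover have "h 0 j \<in> {1, \<i>, -\<i>}" using v3[of 0 j] jk by simp
    moreover have "h j k \<in> {1, \<i>, -\<i>}" using v3[of j k] jk by simp
    ultimately show False by (auto simp: complex_eq_iff)
  qed
  have inj: "inj_on (h 0) {1..<n}"
  proof (rule inj_onI)
    fix x y assume "x \<in> {1..<n}" "y \<in> {1..<n}" "h 0 x = h 0 y"
    then show "x = y" using dist[of x y] by (cases "x = y") auto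
  qed
  have "h 0 ` {1..<n} \<subseteq> {1, \<i>, -\<i>}"
  proof
    fix y assume "y \<in> h 0 ` {1..<n}"
    then obtain x where x: "x \<in> {1..<n}" "y = h 0 x" by auto
    then show "y \<in> {1, \<i>, -\<i>}" using v3[of 0 x] by simp
  qed
  hence "card {1..<n} \<le> card {1, \<i>, -\<i>::complex}" by (intro card_inj_on_le[OF inj]) auto
  also have "card {1, \<i>, -\<i>::complex} = 3" by (simp add: complex_eq_iff)
  finally have n4: "n \<le> 4" by simp
  have iso: "digraph_iso V A W B" if xs: "distinct xs" "length xs = n" "set xs = W"
     and c: "\<forall>i<n. \<forall>j<n. (hvl ws i j = 1 \<or> hvl ws i j = \<i>) \<longleftrightarrow> (xs!i, xs!j) \<in> B" for xs W B
    by (rule iso_perm[OF assms(3) xs]) (use c cond in auto)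
  consider "n = 1" | "n = 2" | "n = 3" | "n = 4" using n1 n4 by linarith
  then show ?thesis
  proof cases
    case 1
    have "digraph_iso V A K1_V K1_A"
      by (rule iso[of "[0]"]) (use 1 in \<open>auto simp: K1_V_def K1_A_def hvl_def\<close>)
    then show ?thesis by blast
  next
    case 2
    note n2 = 2
    have ws2: "ws = [0, h 0 1]" using n2 by (simp add: ws_def h0 numeral_eq_Suc upt_Suc)
    have "h 0 1 \<in> {1, \<i>, -\<i>}" using v3[of 0 1] n2 by simp
    then consider "h 0 1 = 1" | "h 0 1 = \<i>" | "h 0 1 = -\<i>" by blast
    then show ?thesis
    proof cases
      case 1
      have "digraph_iso V A K2_V K2_A"
        by (rule iso[of "[0,1]"]) (use ws2[unfolded 1] n2 in \<open>simp_all add: all2 K2_V_def K2_A_def hvl_def\<close>)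
      then show ?thesis by blast
    next
      case 2
      have "digraph_iso V A T2_V T2_A"
        by (rule iso[of "[0,1]"]) (use ws2[unfolded 2] n2 in \<open>simp_all add: all2 T2_V_def T2_A_def hvl_def complex_eq_iff\<close>)
      then show ?thesis by blast
    next
      case 3
      have "digraph_iso V A T2_V T2_A"
        by (rule iso[of "[1,0]"]) (use ws2[unfolded 3] n2 in \<open>simp_all add: all2 T2_V_def T2_A_def hvl_def complex_eq_iff insert_commute\<close>)
      then show ?thesis by blast
    qed
  next
    case 3
    have ws3: "ws = [0, h 0 1, h 0 2]" using 3 by (simp add: ws_def h0 numeral_eq_Suc upt_Suc)
    obtain xs where "distinct xs \<and> length xs = 3 \<and> set xs = K3'_V \<and>
      (\<forall>i<3. \<forall>j<3. (hvl [0, h 0 1, h 0 2] i j = 1 \<or> hvl [0, h 0 1, h 0 2] i j = \<i>) \<longleftrightarrow> (xs!i, xs!j) \<in> K3'_A)"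
      using case3[of "h 0 1" "h 0 2"] v3[of 0 1] v3[of 0 2] dist[of 1 2] 3 by auto
    hence "digraph_iso V A K3'_V K3'_A" using 3 by (intro iso[of xs]) (simp_all add: ws3)
    then show ?thesis by blast
  next
    case 4
    have ws4: "ws = [0, h 0 1, h 0 2, h 0 3]" using 4 by (simp add: ws_def h0 numeral_eq_Suc upt_Suc)
    obtain xs where "distinct xs \<and> length xs = 4 \<and> set xs = K4'_V \<and>
      (\<forall>i<4. \<forall>j<4. (hvl [0, h 0 1, h 0 2, h 0 3] i j = 1 \<or> hvl [0, h 0 1, h 0 2, h 0 3] i j = \<i>) \<longleftrightarrow> (xs!i, xs!j) \<in> K4'_A)"
      using case4[of "h 0 1" "h 0 2" "h 0 3"] v3[of 0 1] v3[of 0 2] v3[of 0 3] dist[of 1 2] dist[of 1 3] dist[of 2 3] 4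
      by auto
    hence "digraph_iso V A K4'_V K4'_A" using 4 by (intro iso[of xs]) (simp_all add: ws4)
    then show ?thesis by blast
  qed
qed


end
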